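(* Fix $n\ge4$ and a circular ordering $\pi$. For every chain $\mathcal C: D_0\subsetneq D_1\subsetneq\dots\subsetneq D_m$ of sets of pairwise noncrossing diagonals of $P_n$, let $\Delta_{\mathcal C}$ be the corresponding simplex of the barycentric subdivision of $K_{n-1}$ (the convex hull of the barycenters $v_{D_0},\dots,v_{D_m}$ of the corresponding faces), and define $\Phi$ on $\Delta_{\mathcal C}$ affinely by $\Phi\big(\sum_i a_i v_{D_i}\big)=\sum_i a_i\Phi(D_i)$ ($a_i\ge0$, $\sum a_i=1$), so that $\Phi(\Delta_{\mathcal C})$ is the convex hull of $\Phi(D_0),\dots,\Phi(D_m)$. Then $\Phi$ restricted to each $\Delta_{\mathcal C}$ is an embedding into the chamber $\Delta_\pi$ of $\mathfrak S_n$, these maps agree on common faces, and together they define an embedding of the associahedron $K_{n-1}$ (the union of all $\Delta_{\mathcal C}$) into the chamber $\Delta_\pi$ of $\mathfrak S_n$.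
   Context: Fix a circular ordering $\pi=(x_1,\dots,x_n)$ of a set $X$ of $n\ge4$ labels and let $P_n$ be a regular $n$-gon with edges labeled cyclically by $x_1,\dots,x_n$. Diagonals of $P_n$ correspond bijectively to nontrivial splits of $X$ circular w.r.t. $\pi$ (a diagonal separates the edge labels into the two parts); two diagonals cross if they meet in the interior of $P_n$. The chamber $\Delta_\pi$ of the network space $\mathfrak S_n$ is identified with $\{x\in\mathbb R_{\ge0}^{\mathcal D}:\sum_d x_d=1\}$, where $\mathcal D$ is the set of the $n(n-3)/2$ diagonals of $P_n$. The associahedron $K_{n-1}$ is the $(n-3)$-dimensional convex polytope whose faces correspond bijectively to sets $D$ of pairwise noncrossing diagonals of $P_n$, the face of $D$ containing the face of $D'$ iff $D\subseteq D'$; the face of $D$ has codimension $|D|$, vertices correspond to triangulations ($n-3$ diagonals), and the whole polytope corresponds to $D=\emptyset$. For a triangulation $T$, $\Phi(T)\in\mathbb R^{\mathcal D}$ has $d$-coordinate $1/(n-3)$ if $d\in T$ and $0$ otherwise. For a set $D$ of pairwise noncrossing diagonals, $\Phi(D)$ (the image of the barycenter $v_D$ of the face of $D$) is the average of $\Phi(T)$ over all triangulations $T\supseteq D$. *)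

theory Defs
  imports "HOL-Analysis.Analysis"
begin

text \<open>Vertices of the n-gon P_n are 0,...,n-1 in cyclic order (edge x_k joins
vertices k-1 and k).  A diagonal is a pair (i,j) with i < j of non-adjacent vertices.\<close>

type_synonym diag = "nat \<times> nat"

definition is_diag :: "nat \<Rightarrow> diag \<Rightarrow> bool" where
  "is_diag n d = (fst d < snd d \<and> snd d < n \<and> 2 \<le> snd d - fst d
                   \<and> \<not> (fst d = 0 \<and> snd d = n - 1))"

definition diagonals :: "nat \<Rightarrow> diag set" where
  "diagonals n = {d. is_diag n d}"

definition crosses :: "diag \<Rightarrow> diag \<Rightarrow> bool" where
  "crosses d e = ((fst d < fst e \<and> fst e < snd d \<and> snd d < snd e)
                \<or> (fst e < fst d \<and> fst d < snd e \<and> snd e < snd d))"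

definition noncrossing :: "nat \<Rightarrow> diag set \<Rightarrow> bool" where
  "noncrossing n D = (D \<subseteq> diagonals n \<and> (\<forall>d\<in>D. \<forall>e\<in>D. \<not> crosses d e))"

definition triangulation :: "nat \<Rightarrow> diag set \<Rightarrow> bool" where
  "triangulation n T = (noncrossing n T \<and> card T = n - 3)"

text \<open>Points of R^D are functions diag => real vanishing off the diagonals.\<close>
definition Phi_T :: "nat \<Rightarrow> diag set \<Rightarrow> diag \<Rightarrow> real" where
  "Phi_T n T = (\<lambda>d. if d \<in> T then 1 / real (n - 3) else 0)"

definition Phi :: "nat \<Rightarrow> diag set \<Rightarrow> diag \<Rightarrow> real" where
  "Phi n D = (\<lambda>d. (\<Sum>T\<in>{T. triangulation n T \<and> D \<subseteq> T}. Phi_T n T d)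
                    / real (card {T. triangulation n T \<and> D \<subseteq> T}))"

definition chamber :: "nat \<Rightarrow> (diag \<Rightarrow> real) set" where
  "chamber n = {x. (\<forall>d. 0 \<le> x d) \<and> (\<forall>d. d \<notin> diagonals n \<longrightarrow> x d = 0)
                   \<and> (\<Sum>d\<in>diagonals n. x d) = 1}"

definition nc_chain :: "nat \<Rightarrow> diag set set \<Rightarrow> bool" where
  "nc_chain n C = (finite C \<and> C \<noteq> {} \<and> (\<forall>D\<in>C. noncrossing n D)
                   \<and> (\<forall>D\<in>C. \<forall>D'\<in>C. D \<subseteq> D' \<or> D' \<subseteq> D))"

text \<open>The simplex Delta_C of the barycentric subdivision of K_{n-1}: a point
sum_i a_i v_{D_i} is recorded by its barycentric coefficient function a.\<close>
definition chain_simplex :: "diag set set \<Rightarrow> (diag set \<Rightarrow> real) set" where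
  "chain_simplex C = {a. (\<forall>D. 0 \<le> a D) \<and> (\<forall>D. D \<notin> C \<longrightarrow> a D = 0) \<and> (\<Sum>D\<in>C. a D) = 1}"

definition assoc :: "nat \<Rightarrow> (diag set \<Rightarrow> real) set" where
  "assoc n = (\<Union>C\<in>{C. nc_chain n C}. chain_simplex C)"

definition Phi_map :: "nat \<Rightarrow> (diag set \<Rightarrow> real) \<Rightarrow> diag \<Rightarrow> real" where
  "Phi_map n a = (\<lambda>d. \<Sum>D\<in>{D. noncrossing n D}. a D * Phi n D d)"

end

theory Submission
  imports Defs
begin


definition dg :: "nat \<Rightarrow> nat \<Rightarrow> diag \<Rightarrow> bool" where
  "dg a b d = (a \<le> fst d \<and> fst d + 2 \<le> snd d \<and> snd d \<le> b \<and> \<not> (fst d = a \<and> snd d = b))"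

definition ncr :: "nat \<Rightarrow> nat \<Rightarrow> diag set \<Rightarrow> bool" where
  "ncr a b F = (F \<subseteq> Collect (dg a b) \<and> (\<forall>x\<in>F. \<forall>y\<in>F. \<not> crosses x y))"

lemma finite_dg: "finite (Collect (dg a b))"
proof -
  have "Collect (dg a b) \<subseteq> {a..b} \<times> {a..b}"
  proof
    fix x assume "x \<in> Collect (dg a b)"
    then have "a \<le> fst x" "snd x \<le> b" "fst x < snd x" by (simp_all add: dg_def)
    then show "x \<in> {a..b} \<times> {a..b}" by (simp add: mem_Times_iff)
  qed
  then show ?thesis by (rule finite_subset) simp
qed

lemma ncr_finite: "ncr a b F \<Longrightarrow> finite F"
  unfolding ncr_def by (meson finite_dg finite_subset)

lemma dgD: "dg a b x \<Longrightarrow> a \<le> fst x \<and> fst x + 2 \<le> snd x \<and> snd x \<le> b \<and> x \<noteq> (a,b)"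
  by (cases x) (simp add: dg_def)

lemma split_ext:
  assumes ak: "a < k" and kb: "k < b"
    and compat: "\<forall>x\<in>F. \<not> crosses (a,k) x \<and> \<not> crosses (k,b) x"
    and F: "ncr a b F" and dF: "d \<notin> F"
    and d1: "2 \<le> k - a \<Longrightarrow> d \<noteq> (a,k)" and d2: "2 \<le> b - k \<Longrightarrow> d \<noteq> (k,b)"
    and IH1: "\<And>F'. ncr a k F' \<Longrightarrow> d \<notin> F' \<Longrightarrow> \<exists>T. F' \<subseteq> T \<and> ncr a k T \<and> card T = k-a-2 \<and> d \<notin> T"
    and IH2: "\<And>F'. ncr k b F' \<Longrightarrow> d \<notin> F' \<Longrightarrow> \<exists>T. F' \<subseteq> T \<and> ncr k b T \<and> card T = b-k-2 \<and> d \<notin> T"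
  shows "\<exists>T. F \<subseteq> T \<and> ncr a b T \<and> card T = b-a-2 \<and> d \<notin> T"
proof -
  define F1 where "F1 = {x\<in>F. dg a k x}"
  define F2 where "F2 = {x\<in>F. dg k b x}"
  have "ncr a k F1" using F unfolding ncr_def F1_def by auto
  moreover have "d \<notin> F1" using dF F1_def by auto
  ultimately obtain T1 where T1: "F1 \<subseteq> T1" "ncr a k T1" "card T1 = k-a-2" "d \<notin> T1" using IH1 by blast
  have "ncr k b F2" using F unfolding ncr_def F2_def by auto
  moreover have "d \<notin> F2" using dF F2_def by auto
  ultimately obtain T2 where T2: "F2 \<subseteq> T2" "ncr k b T2" "card T2 = b-k-2" "d \<notin> T2" using IH2 by blast
  define A where "A = (if 2 \<le> k - a then {(a,k)} else {})"
  define B where "B = (if 2 \<le> b - k then {(k,b)} else {})"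
  define T where "T = T1 \<union> T2 \<union> A \<union> B"
  have fT1: "finite T1" "finite T2" using T1 T2 ncr_finite by auto
  have T1d: "\<And>x. x \<in> T1 \<Longrightarrow> dg a k x" and T2d: "\<And>x. x \<in> T2 \<Longrightarrow> dg k b x"
    using T1(2) T2(2) unfolding ncr_def by auto
  have FT: "F \<subseteq> T"
  proof
    fix x assume x: "x \<in> F"
    obtain i j where xij: "x = (i,j)" by force
    have dx: "dg a b x" using F x unfolding ncr_def by auto
    have c: "\<not> crosses (a,k) x" "\<not> crosses (k,b) x" using compat x by auto
    have "j \<le> k \<or> k \<le> i" using dx c unfolding xij dg_def crosses_def by auto
    then show "x \<in> T"
    proof
      assume "j \<le> k"
      show ?thesis
      proof (cases "x = (a,k)")
        case True then show ?thesis using dx unfolding T_def A_def dg_def by auto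
      next
        case False
        then have "x \<in> F1" using x dx \<open>j \<le> k\<close> unfolding F1_def dg_def xij by auto
        then show ?thesis using T1 T_def by auto
      qed
    next
      assume "k \<le> i"
      show ?thesis
      proof (cases "x = (k,b)")
        case True then show ?thesis using dx unfolding T_def B_def dg_def by auto
      next
        case False
        then have "x \<in> F2" using x dx \<open>k \<le> i\<close> unfolding F2_def dg_def xij by auto
        then show ?thesis using T2 T_def by auto
      qed
    qed
  qed
  have s1: "\<And>x. dg a k x \<Longrightarrow> dg a b x" "\<And>x. dg k b x \<Longrightarrow> dg a b x"
    using ak kb unfolding dg_def by auto
  have sub: "T \<subseteq> Collect (dg a b)"
  proof -
    have "T1 \<union> T2 \<subseteq> Collect (dg a b)" using T1d T2d s1 by blast
    moreover have "A \<union> B \<subseteq> Collect (dg a b)" using ak kb by (auto simp: A_def B_def dg_def)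
    ultimately show ?thesis by (auto simp: T_def)
  qed
  define L where "L = (\<lambda>x::diag. a \<le> fst x \<and> snd x \<le> k)"
  define R where "R = (\<lambda>x::diag. k \<le> fst x \<and> snd x \<le> b)"
  have sep: "\<And>x y. L x \<Longrightarrow> R y \<Longrightarrow> \<not> crosses x y \<and> \<not> crosses y x"
    unfolding L_def R_def crosses_def by auto
  have endA: "\<And>x. L x \<Longrightarrow> \<not> crosses (a,k) x \<and> \<not> crosses x (a,k)"
    unfolding L_def crosses_def by auto
  have endB: "\<And>x. R x \<Longrightarrow> \<not> crosses (k,b) x \<and> \<not> crosses x (k,b)"
    unfolding R_def crosses_def by auto
  have LT1: "\<And>x. x \<in> T1 \<Longrightarrow> L x" using dgD[OF T1d] unfolding L_def by simp
  have RT2: "\<And>x. x \<in> T2 \<Longrightarrow> R x" using dgD[OF T2d] unfolding R_def by simp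
  have La: "L (a,k)" "R (k,b)" using ak kb unfolding L_def R_def by auto
  have nc: "\<forall>x\<in>T. \<forall>y\<in>T. \<not> crosses x y"
  proof (intro ballI)
    fix x y assume x: "x \<in> T" and y: "y \<in> T"
    have n1: "\<forall>x\<in>T1. \<forall>y\<in>T1. \<not> crosses x y" using T1(2) ncr_def by auto
    have n2: "\<forall>x\<in>T2. \<forall>y\<in>T2. \<not> crosses x y" using T2(2) ncr_def by auto
    have mx: "x \<in> T1 \<or> x \<in> T2 \<or> x = (a,k) \<or> x = (k,b)" using x unfolding T_def A_def B_def by (auto split: if_splits)
    have my: "y \<in> T1 \<or> y \<in> T2 \<or> y = (a,k) \<or> y = (k,b)" using y unfolding T_def A_def B_def by (auto split: if_splits)
    show "\<not> crosses x y"
      using mx my n1 n2 sep endA endB LT1 RT2 La by metis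
  qed
  have disj: "T1 \<inter> T2 = {}" "(T1 \<union> T2) \<inter> A = {}" "(T1 \<union> T2 \<union> A) \<inter> B = {}"
  proof -
    have P1: "\<forall>x\<in>T1. fst x < snd x \<and> snd x \<le> k \<and> x \<noteq> (a,k)"
    proof
      fix x assume "x \<in> T1" from dgD[OF T1d[OF this]] show "fst x < snd x \<and> snd x \<le> k \<and> x \<noteq> (a,k)" by simp
    qed
    have P2: "\<forall>x\<in>T2. k \<le> fst x \<and> x \<noteq> (k,b)"
    proof
      fix x assume "x \<in> T2" from dgD[OF T2d[OF this]] show "k \<le> fst x \<and> x \<noteq> (k,b)" by simp
    qed
    show "T1 \<inter> T2 = {}" using P1 P2 by fastforce
    show "(T1 \<union> T2) \<inter> A = {}" using P1 P2 ak unfolding A_def by auto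
    show "(T1 \<union> T2 \<union> A) \<inter> B = {}" using P1 P2 ak kb unfolding A_def B_def by auto
  qed
  have "card T = card T1 + card T2 + card A + card B"
    unfolding T_def using disj fT1
    by (simp add: card_Un_disjoint A_def B_def)
  also have "\<dots> = b - a - 2" using T1(3) T2(3) ak kb unfolding A_def B_def by auto
  finally have "card T = b - a - 2" .
  moreover have "d \<notin> T" using T1(4) T2(4) d1 d2 unfolding T_def A_def B_def by auto
  ultimately show ?thesis using FT sub nc unfolding ncr_def by (intro exI[of _ T]) simp
qed

lemma extend:
  "ncr a b F \<Longrightarrow> d \<notin> F \<Longrightarrow> \<exists>T. F \<subseteq> T \<and> ncr a b T \<and> card T = b-a-2 \<and> d \<notin> T"
proof (induction "b-a" arbitrary: a b F rule: less_induct)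
  case less
  show ?case
  proof (cases "b < a + 3")
    case True
    have "Collect (dg a b) = {}" using True by (auto simp: dg_def)
    then have "F = {}" using less.prems by (auto simp: ncr_def)
    then show ?thesis using True \<open>Collect (dg a b) = {}\<close> by (auto simp: ncr_def)
  next
    case False
    have F: "ncr a b F" and dF: "d \<notin> F" by fact+
    have finF: "finite F" using ncr_finite F by blast
    have Fd: "\<And>x. x \<in> F \<Longrightarrow> dg a b x" using F by (auto simp: ncr_def)
    have Fnc: "\<And>x y. x \<in> F \<Longrightarrow> y \<in> F \<Longrightarrow> \<not> crosses x y" using F by (auto simp: ncr_def)
    have IH: "\<And>a' b' F'. b' - a' < b - a \<Longrightarrow> ncr a' b' F' \<Longrightarrow> d \<notin> F' \<Longrightarrow>
       \<exists>T. F' \<subseteq> T \<and> ncr a' b' T \<and> card T = b'-a'-2 \<and> d \<notin> T"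
      using less.hyps by blast
    define J where "J = {j. (a,j) \<in> F}"
    define I where "I = {i. (i,b) \<in> F}"
    have finJ: "finite J" "finite I"
    proof -
      have "J \<subseteq> snd ` F" unfolding J_def by force
      then show "finite J" using finF finite_subset by blast
      have "I \<subseteq> fst ` F" unfolding I_def by force
      then show "finite I" using finF finite_subset by blast
    qed
    define k1 where "k1 = Max (insert (a+1) J)"
    define k2 where "k2 = Min (insert (b-1) I)"
    have k1J: "\<And>j. j \<in> J \<Longrightarrow> j \<le> k1" unfolding k1_def using finJ by simp
    have k1ge: "a + 1 \<le> k1" unfolding k1_def using finJ by simp
    have k1mem: "k1 = a + 1 \<or> (a,k1) \<in> F"
      using Max_in[of "insert (a+1) J"] finJ unfolding k1_def J_def by auto
    have k1lt: "k1 < b" using k1mem Fd[of "(a,k1)"] False by (auto simp: dg_def)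
    have k2I: "\<And>i. i \<in> I \<Longrightarrow> k2 \<le> i" unfolding k2_def using finJ by simp
    have k2le: "k2 \<le> b - 1" unfolding k2_def using finJ by simp
    have k2mem: "k2 = b - 1 \<or> (k2,b) \<in> F"
      using Min_in[of "insert (b-1) I"] finJ unfolding k2_def I_def by auto
    have k2gt: "a < k2" using k2mem Fd[of "(k2,b)"] False by (auto simp: dg_def)
    have c1: "\<forall>x\<in>F. \<not> crosses (a,k1) x \<and> \<not> crosses (k1,b) x"
    proof
      fix x assume x: "x \<in> F"
      obtain i j where xij: "x = (i,j)" by force
      have dx: "dg a b (i,j)" using Fd x xij by auto
      have A: "\<not> crosses (a,k1) x"
      proof (cases "k1 = a + 1")
        case True then show ?thesis using dx unfolding xij crosses_def dg_def by auto
      next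
        case False then have "(a,k1) \<in> F" using k1mem by simp
        then show ?thesis using Fnc x by blast
      qed
      have B: "\<not> crosses (k1,b) x"
      proof
        assume cr: "crosses (k1,b) x"
        then have h: "i < k1" "k1 < j" "j < b" using dx unfolding xij crosses_def dg_def by auto
        show False
        proof (cases "i = a")
          case True
          then have "j \<in> J" using x xij J_def by auto
          then show False using k1J h by fastforce
        next
          case False
          then have "a < i" using dx by (auto simp: dg_def)
          then have "crosses (a,k1) x" using h xij by (auto simp: crosses_def)
          then show False using A by simp
        qed
      qed
      show "\<not> crosses (a,k1) x \<and> \<not> crosses (k1,b) x" using A B by simp
    qed
    have c2: "\<forall>x\<in>F. \<not> crosses (a,k2) x \<and> \<not> crosses (k2,b) x"
    proof
      fix x assume x: "x \<in> F"
      obtain i j where xij: "x = (i,j)" by force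
      have dx: "dg a b (i,j)" using Fd x xij by auto
      have B: "\<not> crosses (k2,b) x"
      proof (cases "k2 = b - 1")
        case True then show ?thesis using dx unfolding xij crosses_def dg_def by auto
      next
        case False then have "(k2,b) \<in> F" using k2mem by simp
        then show ?thesis using Fnc x by blast
      qed
      have A: "\<not> crosses (a,k2) x"
      proof
        assume cr: "crosses (a,k2) x"
        then have h: "a < i" "i < k2" "k2 < j" using dx unfolding xij crosses_def dg_def by auto
        show False
        proof (cases "j = b")
          case True
          then have "i \<in> I" using x xij I_def by auto
          then show False using k2I h by fastforce
        next
          case False
          then have "j < b" using dx by (auto simp: dg_def)
          then have "crosses (k2,b) x" using h xij by (auto simp: crosses_def)
          then show False using B by simp
        qed
      qed
      show "\<not> crosses (a,k2) x \<and> \<not> crosses (k2,b) x" using A B by simp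
    qed
    show ?thesis
    proof (cases "d = (k1,b)")
      case False
      show ?thesis
      proof (rule split_ext[OF _ k1lt c1 F dF])
        show "a < k1" using k1ge by simp
        show "d \<noteq> (a, k1)" if "2 \<le> k1 - a" using that k1mem dF by auto
        show "d \<noteq> (k1, b)" using False .
        show "\<exists>T. F' \<subseteq> T \<and> ncr a k1 T \<and> card T = k1 - a - 2 \<and> d \<notin> T"
          if "ncr a k1 F'" "d \<notin> F'" for F' using IH[OF _ that] k1lt k1ge by simp
        show "\<exists>T. F' \<subseteq> T \<and> ncr k1 b T \<and> card T = b - k1 - 2 \<and> d \<notin> T"
          if "ncr k1 b F'" "d \<notin> F'" for F' using IH[OF _ that] k1ge k1lt by simp
      qed
    next
      case True
      show ?thesis
      proof (rule split_ext[OF k2gt _ c2 F dF])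
        show "k2 < b" using k2le False by simp
        show "d \<noteq> (a, k2)" using True k1ge by auto
        show "d \<noteq> (k2, b)" if "2 \<le> b - k2" using that k2mem dF by auto
        show "\<exists>T. F' \<subseteq> T \<and> ncr a k2 T \<and> card T = k2 - a - 2 \<and> d \<notin> T"
          if "ncr a k2 F'" "d \<notin> F'" for F' using IH[OF _ that] k2le False by simp
        show "\<exists>T. F' \<subseteq> T \<and> ncr k2 b T \<and> card T = b - k2 - 2 \<and> d \<notin> T"
          if "ncr k2 b F'" "d \<notin> F'" for F' using IH[OF _ that] k2gt k2le by simp
      qed
    qed
  qed
qed



lemma diagonals_dg: "1 \<le> n \<Longrightarrow> diagonals n = Collect (dg 0 (n-1))"
proof -
  assume n: "1 \<le> n"
  have "is_diag n (i,j) = dg 0 (n-1) (i,j)" for i j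
    using n unfolding is_diag_def dg_def by (simp, linarith)
  then show ?thesis
  proof -
    assume h: "\<And>i j. is_diag n (i,j) = dg 0 (n-1) (i,j)"
    show ?thesis
    proof (rule set_eqI)
      fix x show "x \<in> diagonals n \<longleftrightarrow> x \<in> Collect (dg 0 (n - 1))"
        using h[of "fst x" "snd x"] by (simp add: diagonals_def)
    qed
  qed
qed

lemma noncrossing_ncr: "1 \<le> n \<Longrightarrow> noncrossing n D = ncr 0 (n-1) D"
  by (simp add: noncrossing_def ncr_def diagonals_dg)

lemma finite_diagonals: "finite (diagonals n)"
proof -
  have "diagonals n \<subseteq> {0..<n} \<times> {0..<n}"
  proof
    fix x assume "x \<in> diagonals n"
    then have "is_diag n x" by (simp add: diagonals_def)
    then have "fst x < snd x" "snd x < n" by (simp_all add: is_diag_def)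
    then have "fst x < n" "snd x < n" by linarith+
    then show "x \<in> {0..<n} \<times> {0..<n}" by (simp add: mem_Times_iff)
  qed
  then show ?thesis by (rule finite_subset) simp
qed

lemma tri_exists:
  assumes "4 \<le> n" "noncrossing n D" "d \<notin> D"
  shows "\<exists>T. triangulation n T \<and> D \<subseteq> T \<and> d \<notin> T"
proof -
  have "ncr 0 (n-1) D" using assms(1,2) noncrossing_ncr[of n D] by simp
  from extend[OF this assms(3)] obtain T where "D \<subseteq> T" "ncr 0 (n-1) T" "card T = n-1-0-2" "d \<notin> T"
    by (elim exE conjE)
  moreover have "noncrossing n T" using noncrossing_ncr[of n T] assms(1) \<open>ncr 0 (n-1) T\<close> by simp
  ultimately show ?thesis unfolding triangulation_def by (intro exI[of _ T]) simp
qed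

definition TS :: "nat \<Rightarrow> diag set \<Rightarrow> diag set set" where
  "TS n D = {T. triangulation n T \<and> D \<subseteq> T}"

lemma finite_TS: "finite (TS n D)"
proof -
  have "TS n D \<subseteq> Pow (diagonals n)" by (auto simp: TS_def triangulation_def noncrossing_def)
  then show ?thesis using finite_diagonals finite_subset by blast
qed

lemma TS_ne: "4 \<le> n \<Longrightarrow> noncrossing n D \<Longrightarrow> TS n D \<noteq> {}"
proof -
  assume a: "4 \<le> n" "noncrossing n D"
  have "(0,0) \<notin> D" using a(2) by (auto simp: noncrossing_def diagonals_def is_diag_def)
  then obtain T where "triangulation n T" "D \<subseteq> T" using tri_exists[OF a, of "(0,0)"] by blast
  then show ?thesis by (auto simp: TS_def)
qed

lemma Phi_alt: "Phi n D d = (\<Sum>T\<in>TS n D. Phi_T n T d) / real (card (TS n D))"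
  by (simp add: Phi_def TS_def)

lemma Phi_T_nonneg: "0 \<le> Phi_T n T d" by (simp add: Phi_T_def)
lemma Phi_T_le: "Phi_T n T d \<le> 1 / real (n-3)" by (simp add: Phi_T_def)

lemma Phi_nonneg: "0 \<le> Phi n D d"
  unfolding Phi_alt by (intro divide_nonneg_nonneg sum_nonneg Phi_T_nonneg) simp

lemma Phi_off: "d \<notin> diagonals n \<Longrightarrow> Phi n D d = 0"
  unfolding Phi_alt
  by (auto simp: Phi_T_def TS_def triangulation_def noncrossing_def intro!: sum.neutral)

lemma Phi_in:
  assumes "4 \<le> n" "noncrossing n D" "d \<in> D"
  shows "Phi n D d = 1 / real (n-3)"
proof -
  have "(\<Sum>T\<in>TS n D. Phi_T n T d) = (\<Sum>T\<in>TS n D. 1 / real (n-3))"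
    using assms by (intro sum.cong) (auto simp: Phi_T_def TS_def)
  moreover have "card (TS n D) > 0" using TS_ne[OF assms(1,2)] finite_TS card_gt_0_iff by blast
  ultimately show ?thesis unfolding Phi_alt by simp
qed

lemma le_div_aux: "(S::real) \<le> (\<Sum>T\<in>A. x) \<Longrightarrow> card A > 0 \<Longrightarrow> S / real (card A) \<le> x"
  by (simp add: pos_divide_le_eq mult.commute)

lemma lt_div_aux: "(S::real) < (\<Sum>T\<in>A. x) \<Longrightarrow> card A > 0 \<Longrightarrow> S / real (card A) < x"
  by (simp add: pos_divide_less_eq mult.commute)

lemma Phi_le:
  assumes "4 \<le> n" "noncrossing n D"
  shows "Phi n D d \<le> 1 / real (n-3)"
proof -
  have "(\<Sum>T\<in>TS n D. Phi_T n T d) \<le> (\<Sum>T\<in>TS n D. 1 / real (n-3))"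
    by (intro sum_mono Phi_T_le)
  moreover have "card (TS n D) > 0" using TS_ne[OF assms(1,2)] finite_TS card_gt_0_iff by blast
  ultimately show ?thesis unfolding Phi_alt by (rule le_div_aux)
qed

lemma Phi_lt:
  assumes "4 \<le> n" "noncrossing n D" "d \<notin> D"
  shows "Phi n D d < 1 / real (n-3)"
proof -
  obtain T0 where T0: "T0 \<in> TS n D" "d \<notin> T0" using tri_exists[OF assms] by (auto simp: TS_def)
  have "(\<Sum>T\<in>TS n D. Phi_T n T d) < (\<Sum>T\<in>TS n D. 1 / real (n-3))"
    using assms(1) T0
    by (intro sum_strict_mono_ex1 finite_TS) (auto simp: Phi_T_le Phi_T_def intro!: bexI[of _ T0])
  moreover have "card (TS n D) > 0" using TS_ne[OF assms(1,2)] finite_TS card_gt_0_iff by blast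
  ultimately show ?thesis unfolding Phi_alt by (rule lt_div_aux)
qed

lemma Phi_sum:
  assumes "4 \<le> n" "noncrossing n D"
  shows "(\<Sum>d\<in>diagonals n. Phi n D d) = 1"
proof -
  have one: "(\<Sum>d\<in>diagonals n. Phi_T n T d) = 1" if "T \<in> TS n D" for T
  proof -
    have T: "T \<subseteq> diagonals n" "card T = n - 3"
      using that by (auto simp: TS_def triangulation_def noncrossing_def)
    have "(\<Sum>d\<in>diagonals n. Phi_T n T d) = (\<Sum>d\<in>diagonals n \<inter> T. 1 / real (n-3))"
      unfolding Phi_T_def using sum.inter_restrict[OF finite_diagonals, of "\<lambda>_. 1 / real (n-3)" n T]
      by simp
    also have "\<dots> = real (card T) / real (n-3)" using T(1) by (simp add: Int_absorb1)
    also have "\<dots> = 1" using T(2) assms(1) by simp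
    finally show ?thesis .
  qed
  have "(\<Sum>d\<in>diagonals n. Phi n D d) = (\<Sum>d\<in>diagonals n. \<Sum>T\<in>TS n D. Phi_T n T d) / real (card (TS n D))"
    unfolding Phi_alt by (simp add: sum_divide_distrib)
  also have "\<dots> = (\<Sum>T\<in>TS n D. \<Sum>d\<in>diagonals n. Phi_T n T d) / real (card (TS n D))"
    by (simp add: sum.swap[of _ "diagonals n"])
  also have "\<dots> = real (card (TS n D)) / real (card (TS n D))" using one by simp
  also have "\<dots> = 1" using TS_ne[OF assms] finite_TS by simp
  finally show ?thesis .
qed



definition NC :: "nat \<Rightarrow> diag set set" where "NC n = {D. noncrossing n D}"

lemma finite_NC: "finite (NC n)"
proof -
  have "NC n \<subseteq> Pow (diagonals n)" by (auto simp: NC_def noncrossing_def)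
  then show ?thesis using finite_diagonals finite_subset by blast
qed

definition good :: "nat \<Rightarrow> (diag set \<Rightarrow> real) \<Rightarrow> bool" where
  "good n f = ((\<forall>D. 0 \<le> f D) \<and> (\<forall>D. D \<notin> NC n \<longrightarrow> f D = 0)
       \<and> (\<forall>D D'. f D \<noteq> 0 \<longrightarrow> f D' \<noteq> 0 \<longrightarrow> D \<subseteq> D' \<or> D' \<subseteq> D))"

definition supp :: "nat \<Rightarrow> (diag set \<Rightarrow> real) \<Rightarrow> diag set set" where
  "supp n f = {D \<in> NC n. f D \<noteq> 0}"

lemma Phi_map_NC: "Phi_map n f d = (\<Sum>D\<in>NC n. f D * Phi n D d)"
  by (simp add: Phi_map_def NC_def)

lemma mass:
  assumes "4 \<le> n"
  shows "(\<Sum>d\<in>diagonals n. Phi_map n f d) = (\<Sum>D\<in>NC n. f D)"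
proof -
  have "(\<Sum>d\<in>diagonals n. Phi_map n f d) = (\<Sum>D\<in>NC n. f D * (\<Sum>d\<in>diagonals n. Phi n D d))"
    unfolding Phi_map_NC by (simp add: sum.swap[of _ "diagonals n"] sum_distrib_left)
  also have "\<dots> = (\<Sum>D\<in>NC n. f D)"
    using Phi_sum[OF assms] by (intro sum.cong) (auto simp: NC_def)
  finally show ?thesis .
qed

lemma Phi_map_upd:
  assumes "D \<in> NC n"
  shows "Phi_map n (h(D:=x)) d = Phi_map n h d + (x - h D) * Phi n D d"
proof -
  have "Phi_map n (h(D:=x)) d = x * Phi n D d + (\<Sum>E\<in>NC n - {D}. (h(D:=x)) E * Phi n E d)"
    unfolding Phi_map_NC using sum.remove[OF finite_NC assms, of "\<lambda>E. (h(D:=x)) E * Phi n E d"] by simp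
  also have "(\<Sum>E\<in>NC n - {D}. (h(D:=x)) E * Phi n E d) = (\<Sum>E\<in>NC n - {D}. h E * Phi n E d)"
    by (intro sum.cong) auto
  also have "Phi_map n h d = h D * Phi n D d + (\<Sum>E\<in>NC n - {D}. h E * Phi n E d)"
    unfolding Phi_map_NC using sum.remove[OF finite_NC assms] by simp
  ultimately show ?thesis unfolding fun_upd_def left_diff_distrib by linarith
qed

lemma maxset:
  assumes n: "4 \<le> n" and g: "good n f" and D0: "D0 \<in> NC n" "f D0 > 0"
    and least: "\<And>D. f D \<noteq> 0 \<Longrightarrow> D0 \<subseteq> D"
  shows "Phi_map n f d = (\<Sum>D\<in>NC n. f D) / real (n-3) \<longleftrightarrow> d \<in> D0"
proof
  assume d: "d \<in> D0"
  have "Phi_map n f d = (\<Sum>D\<in>NC n. f D / real (n-3))"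
    unfolding Phi_map_NC
  proof (intro sum.cong refl)
    fix D assume D: "D \<in> NC n"
    show "f D * Phi n D d = f D / real (n - 3)"
    proof (cases "f D = 0")
      case False
      then have "d \<in> D" using least d by auto
      then show ?thesis using Phi_in[OF n _ \<open>d \<in> D\<close>] D by (simp add: NC_def)
    qed simp
  qed
  then show "Phi_map n f d = (\<Sum>D\<in>NC n. f D) / real (n-3)" by (simp add: sum_divide_distrib)
next
  assume eq: "Phi_map n f d = (\<Sum>D\<in>NC n. f D) / real (n-3)"
  show "d \<in> D0"
  proof (rule ccontr)
    assume d: "d \<notin> D0"
    have "Phi_map n f d < (\<Sum>D\<in>NC n. f D / real (n-3))"
      unfolding Phi_map_NC
    proof (rule sum_strict_mono_ex1[OF finite_NC])
      show "\<forall>D\<in>NC n. f D * Phi n D d \<le> f D / real (n - 3)"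
      proof
        fix D assume "D \<in> NC n"
        then have "Phi n D d \<le> 1 / real (n-3)" using Phi_le[OF n] by (simp add: NC_def)
        then have "f D * Phi n D d \<le> f D * (1 / real (n-3))"
          using g by (intro mult_left_mono) (auto simp: good_def)
        then show "f D * Phi n D d \<le> f D / real (n - 3)" by simp
      qed
      have "Phi n D0 d < 1 / real (n-3)" using Phi_lt[OF n _ d] D0 by (simp add: NC_def)
      then have "f D0 * Phi n D0 d < f D0 * (1 / real (n-3))"
        using D0 by (intro mult_strict_left_mono) auto
      then show "\<exists>D\<in>NC n. f D * Phi n D d < f D / real (n - 3)" using D0 by auto
    qed
    then show False using eq by (simp add: sum_divide_distrib)
  qed
qed

lemma least_ex:
  assumes "finite S" "S \<noteq> {}" "\<forall>D\<in>S. \<forall>D'\<in>S. D \<subseteq> D' \<or> D' \<subseteq> D"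
  shows "\<exists>D0\<in>S. \<forall>D\<in>S. D0 \<subseteq> D"
proof -
  obtain m where m: "m \<in> S" "\<forall>x\<in>S. \<not> x < m" using ex_min_if_finite[OF assms(1,2)] by blast
  then show ?thesis using assms(3) by (metis psubsetI)
qed

lemma good_least:
  assumes "good n f" "supp n f \<noteq> {}"
  shows "\<exists>D0. D0 \<in> NC n \<and> f D0 > 0 \<and> (\<forall>D. f D \<noteq> 0 \<longrightarrow> D0 \<subseteq> D)"
proof -
  have fin: "finite (supp n f)" using finite_NC by (simp add: supp_def)
  have "\<forall>D\<in>supp n f. \<forall>D'\<in>supp n f. D \<subseteq> D' \<or> D' \<subseteq> D" using assms(1) by (auto simp: good_def supp_def)
  then obtain D0 where D0: "D0 \<in> supp n f" "\<forall>D\<in>supp n f. D0 \<subseteq> D" using least_ex[OF fin assms(2)] by blast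
  have "f D0 > 0" using D0(1) assms(1) by (auto simp: supp_def good_def less_le)
  moreover have "\<forall>D. f D \<noteq> 0 \<longrightarrow> D0 \<subseteq> D" using D0 assms(1) by (auto simp: supp_def good_def)
  ultimately show ?thesis using D0(1) by (auto simp: supp_def)
qed

lemma good_upd:
  assumes "good n h" "D \<in> NC n" "0 \<le> x" "x \<noteq> 0 \<Longrightarrow> h D \<noteq> 0"
  shows "good n (h(D:=x))"
  using assms unfolding good_def by (metis fun_upd_apply)

lemma mass_eq:
  assumes "4 \<le> n" "Phi_map n f = Phi_map n g"
  shows "(\<Sum>D\<in>NC n. f D) = (\<Sum>D\<in>NC n. g D)"
  using mass[OF assms(1), of f] mass[OF assms(1), of g] assms(2) by simp

lemma supp_empty_zero:
  assumes "good n f" "supp n f = {}" shows "f = (\<lambda>_. 0)"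
  using assms by (auto simp: good_def supp_def fun_eq_iff)

lemma mass_pos:
  assumes "good n f" "supp n f \<noteq> {}" shows "(\<Sum>D\<in>NC n. f D) > 0"
proof -
  obtain D where "D \<in> NC n" "f D \<noteq> 0" using assms(2) by (auto simp: supp_def)
  moreover have "\<forall>D. 0 \<le> f D" using assms(1) by (simp add: good_def)
  ultimately show ?thesis using finite_NC
    by (metis less_eq_real_def sum_nonneg_eq_0_iff sum_nonneg)
qed

lemma minset_eq:
  assumes n: "4 \<le> n" and gf: "good n f" and gg: "good n g" and eq: "Phi_map n f = Phi_map n g"
    and D0: "D0 \<in> NC n" "f D0 > 0" "\<And>D. f D \<noteq> 0 \<Longrightarrow> D0 \<subseteq> D"
    and E0: "E0 \<in> NC n" "g E0 > 0" "\<And>D. g D \<noteq> 0 \<Longrightarrow> E0 \<subseteq> D"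
  shows "D0 = E0"
proof -
  have m: "(\<Sum>D\<in>NC n. f D) = (\<Sum>D\<in>NC n. g D)" using mass_eq[OF n eq] .
  have sub: "D0 \<subseteq> diagonals n" "E0 \<subseteq> diagonals n" using D0(1) E0(1) by (auto simp: NC_def noncrossing_def)
  have "d \<in> D0 \<longleftrightarrow> d \<in> E0" if "d \<in> diagonals n" for d
    using maxset[OF n gf D0, of d] maxset[OF n gg E0, of d] eq m by simp
  then show ?thesis using sub by blast
qed

lemma no_gt:
  assumes n: "4 \<le> n" and gf: "good n f" and gg: "good n g" and eq: "Phi_map n f = Phi_map n g"
    and D0: "D0 \<in> NC n" "\<And>D. f D \<noteq> 0 \<Longrightarrow> D0 \<subseteq> D" "\<And>D. g D \<noteq> 0 \<Longrightarrow> D0 \<subseteq> D"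
    and gt: "f D0 > g D0"
  shows False
proof -
  define f' where "f' = f(D0 := f D0 - g D0)"
  define g' where "g' = g(D0 := 0)"
  have "0 \<le> g D0" using gg by (simp add: good_def)
  then have "f D0 \<noteq> 0" "0 \<le> f D0 - g D0" using gt by auto
  then have gf': "good n f'" unfolding f'_def by (intro good_upd[OF gf D0(1)]) auto
  have gg': "good n g'" unfolding g'_def by (intro good_upd[OF gg D0(1)]) auto
  have "Phi_map n f' d = Phi_map n g' d" for d
    unfolding f'_def g'_def Phi_map_upd[OF D0(1)] using eq by (simp add: algebra_simps)
  then have eq': "Phi_map n f' = Phi_map n g'" by (simp add: fun_eq_iff)
  have f'0: "f' D0 > 0" using gt by (simp add: f'_def)
  have "supp n f' \<noteq> {}" using f'0 D0(1) by (auto simp: supp_def)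
  then have "(\<Sum>D\<in>NC n. f' D) > 0" using mass_pos gf' by blast
  then have "(\<Sum>D\<in>NC n. g' D) > 0" using mass_eq[OF n eq'] by simp
  then have "supp n g' \<noteq> {}" using supp_empty_zero[OF gg'] by force
  then obtain E1 where E1: "E1 \<in> NC n" "g' E1 > 0" "\<forall>D. g' D \<noteq> 0 \<longrightarrow> E1 \<subseteq> D"
    using good_least[OF gg'] by blast
  have "E1 \<noteq> D0" using E1(2) by (auto simp: g'_def)
  moreover have "D0 = E1"
  proof (rule minset_eq[OF n gf' gg' eq' D0(1) f'0 _ E1(1,2)])
    show "\<And>D. f' D \<noteq> 0 \<Longrightarrow> D0 \<subseteq> D" using D0(2) by (auto simp: f'_def split: if_splits)
    show "\<And>D. g' D \<noteq> 0 \<Longrightarrow> E1 \<subseteq> D" using E1(3) by auto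
  qed
  ultimately show False by simp
qed

lemma inj_core:
  assumes n: "4 \<le> n"
  shows "\<And>f g. good n f \<Longrightarrow> good n g \<Longrightarrow> card (supp n f) + card (supp n g) = m \<Longrightarrow>
     Phi_map n f = Phi_map n g \<Longrightarrow> f = g"
proof (induction m rule: less_induct)
  case (less m f g)
  have m: "(\<Sum>D\<in>NC n. f D) = (\<Sum>D\<in>NC n. g D)" using mass_eq[OF n less.prems(4)] .
  show ?case
  proof (cases "supp n f = {} \<or> supp n g = {}")
    case True
    then show ?thesis
      using supp_empty_zero[OF less.prems(1)] supp_empty_zero[OF less.prems(2)]
        mass_pos[OF less.prems(1)] mass_pos[OF less.prems(2)] m by force
  next
    case False
    obtain D0 where D0: "D0 \<in> NC n" "f D0 > 0" "\<forall>D. f D \<noteq> 0 \<longrightarrow> D0 \<subseteq> D"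
      using good_least[OF less.prems(1)] False by blast
    obtain E0 where E0: "E0 \<in> NC n" "g E0 > 0" "\<forall>D. g D \<noteq> 0 \<longrightarrow> E0 \<subseteq> D"
      using good_least[OF less.prems(2)] False by blast
    have "D0 = E0" using minset_eq[OF n less.prems(1,2,4) D0(1,2) _ E0(1,2)] D0(3) E0(3) by blast
    have same: "f D0 = g D0"
    proof (rule ccontr)
      assume "f D0 \<noteq> g D0"
      then consider "f D0 > g D0" | "g D0 > f D0" by linarith
      then show False
      proof cases
        case 1 then show False using no_gt[OF n less.prems(1,2,4) D0(1)] D0(3) E0(3) \<open>D0 = E0\<close> by blast
      next
        case 2 then show False using no_gt[OF n less.prems(2,1) less.prems(4)[symmetric] D0(1)] D0(3) E0(3) \<open>D0 = E0\<close> by blast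
      qed
    qed
    define f' where "f' = f(D0 := 0)"
    define g' where "g' = g(D0 := 0)"
    have gf': "good n f'" unfolding f'_def by (intro good_upd[OF less.prems(1) D0(1)]) auto
    have gg': "good n g'" unfolding g'_def by (intro good_upd[OF less.prems(2) D0(1)]) auto
    have eq': "Phi_map n f' = Phi_map n g'"
      unfolding f'_def g'_def using Phi_map_upd[OF D0(1)] less.prems(4) same by (auto simp: fun_eq_iff)
    have finS: "finite (supp n f)" "finite (supp n g)" using finite_NC by (auto simp: supp_def)
    have "supp n f' = supp n f - {D0}" "supp n g' = supp n g - {D0}"
      by (auto simp: supp_def f'_def g'_def)
    moreover have "D0 \<in> supp n f" "D0 \<in> supp n g" using D0 same by (auto simp: supp_def)
    moreover have "card (supp n f) > 0" "card (supp n g) > 0"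
      using \<open>D0 \<in> supp n f\<close> \<open>D0 \<in> supp n g\<close> finS card_gt_0_iff by blast+
    ultimately have "card (supp n f') + card (supp n g') < m"
      using less.prems(3) finS by (simp add: card_Diff_singleton)
    then have "f' = g'" using less.IH gf' gg' eq' by blast
    then show ?thesis using same by (auto simp: f'_def g'_def fun_eq_iff split: if_splits)
  qed
qed



lemma homeo_compact_gen:
  fixes f :: "(diag set \<Rightarrow> real) \<Rightarrow> (diag \<Rightarrow> real)"
  assumes S: "compact S" and cf0: "continuous_on S f" and inj: "inj_on f S"
  shows "\<exists>g. homeomorphism S (f ` S) f g"
proof -
  define g where "g = inv_into S f"
  have H: "Hausdorff_space (euclidean :: (diag \<Rightarrow> real) topology)"
    by (metis euclidean_product_topology Hausdorff_space_product_topology Hausdorff_space_euclidean)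
  have cs: "compact_space (top_of_set S)" using S compact_space_subtopology compactin_euclidean_iff by blast
  have cf: "continuous_map (top_of_set S) euclidean f" using cf0 by simp
  have gf: "\<And>x. x \<in> topspace (top_of_set S) \<Longrightarrow> g (f x) = x" using inj by (simp add: g_def)
  have "continuous_map (subtopology euclidean (f ` S)) (top_of_set S) g"
    by (rule continuous_inverse_map[where g=g and f=f and X="top_of_set S" and Y=euclidean]) (use cs H cf gf in auto)
  then have cg: "continuous_on (f ` S) g" by simp
  show ?thesis
  proof (intro exI[of _ g] homeomorphismI)
    show "continuous_on S f" by fact
    show "continuous_on (f ` S) g" by fact
    show "f ` S \<subseteq> f ` S" by simp
    show "g ` f ` S \<subseteq> S" using inj by (auto simp: g_def)
    show "\<And>x. x \<in> S \<Longrightarrow> g (f x) = x" using inj by (simp add: g_def)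
    show "\<And>y. y \<in> f ` S \<Longrightarrow> f (g y) = y" by (auto simp: g_def f_inv_into_f)
  qed
qed

lemma cont_coord: "continuous_on S (\<lambda>a::'a \<Rightarrow> real. a D)"
  by (rule continuous_on_subset[OF continuous_on_product_coordinates]) simp

lemma cont_Phi_map: "continuous_on S (Phi_map n)"
proof (rule continuous_on_coordinatewise_then_product)
  fix d
  show "continuous_on S (\<lambda>a. Phi_map n a d)"
    unfolding Phi_map_def
    by (intro continuous_on_sum continuous_on_mult continuous_on_const cont_coord)
qed

lemma compact_chain_simplex:
  assumes fin: "finite C"
  shows "compact (chain_simplex C)"
proof -
  define K where "K = (\<lambda>D::diag set. if D \<in> C then {0..1::real} else {0})"
  have "compactin (product_topology (\<lambda>_. euclidean) UNIV) (PiE UNIV K)"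
    unfolding compactin_PiE by (auto simp: K_def)
  then have cK: "compact (PiE UNIV K)" by (simp add: euclidean_product_topology)
  have cl: "closed {a::diag set \<Rightarrow> real. (\<Sum>D\<in>C. a D) = 1}"
    by (rule closed_Collect_eq) (intro continuous_on_sum cont_coord continuous_on_const)+
  have eq: "chain_simplex C = PiE UNIV K \<inter> {a. (\<Sum>D\<in>C. a D) = 1}"
  proof (rule set_eqI)
    fix a :: "diag set \<Rightarrow> real"
    show "a \<in> chain_simplex C \<longleftrightarrow> a \<in> PiE UNIV K \<inter> {a. (\<Sum>D\<in>C. a D) = 1}"
    proof
      assume a: "a \<in> chain_simplex C"
      have "a D \<le> 1" if "D \<in> C" for D
      proof -
        have "a D \<le> (\<Sum>D\<in>C. a D)" using a fin that by (intro member_le_sum) (auto simp: chain_simplex_def)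
        then show ?thesis using a by (simp add: chain_simplex_def)
      qed
      then show "a \<in> PiE UNIV K \<inter> {a. (\<Sum>D\<in>C. a D) = 1}"
        using a by (auto simp: chain_simplex_def K_def PiE_iff)
    next
      assume a: "a \<in> PiE UNIV K \<inter> {a. (\<Sum>D\<in>C. a D) = 1}"
      then have aK: "\<And>D. a D \<in> K D" by (auto simp: PiE_iff)
      have "0 \<le> a D \<and> (D \<notin> C \<longrightarrow> a D = 0)" for D
        using aK[of D] by (cases "D \<in> C") (auto simp: K_def)
      then show "a \<in> chain_simplex C" using a
        unfolding chain_simplex_def by auto
    qed
  qed
  show ?thesis unfolding eq by (rule compact_Int_closed[OF cK cl])
qed

lemma chain_good:
  assumes "nc_chain n C" "a \<in> chain_simplex C"
  shows "good n a"
proof -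
  have a1: "\<forall>D. 0 \<le> a D" "\<forall>D. D \<notin> C \<longrightarrow> a D = 0" using assms(2) by (simp_all add: chain_simplex_def)
  have c1: "\<forall>D\<in>C. noncrossing n D" "\<forall>D\<in>C. \<forall>D'\<in>C. D \<subseteq> D' \<or> D' \<subseteq> D"
    using assms(1) by (simp_all add: nc_chain_def)
  have "\<forall>D. D \<notin> NC n \<longrightarrow> a D = 0" using a1(2) c1(1) by (auto simp: NC_def)
  moreover have "\<forall>D D'. a D \<noteq> 0 \<longrightarrow> a D' \<noteq> 0 \<longrightarrow> D \<subseteq> D' \<or> D' \<subseteq> D"
    using a1(2) c1(2) by metis
  ultimately show ?thesis using a1(1) unfolding good_def by simp
qed

lemma assoc_good: "a \<in> assoc n \<Longrightarrow> good n a"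
proof -
  assume "a \<in> assoc n"
  then obtain C where "nc_chain n C" "a \<in> chain_simplex C" unfolding assoc_def by auto
  then show ?thesis by (rule chain_good)
qed

lemma inj_assoc:
  assumes "4 \<le> n" shows "inj_on (Phi_map n) (assoc n)"
proof (rule inj_onI)
  fix a b assume "a \<in> assoc n" "b \<in> assoc n" "Phi_map n a = Phi_map n b"
  then show "a = b" using inj_core[OF assms assoc_good assoc_good refl] by simp
qed

lemma chain_in_chamber:
  assumes n: "4 \<le> n" and C: "nc_chain n C" and a: "a \<in> chain_simplex C"
  shows "Phi_map n a \<in> chamber n"
proof -
  have g: "good n a" using chain_good[OF C a] .
  have CNC: "C \<subseteq> NC n" using C by (auto simp: nc_chain_def NC_def)
  have nn: "\<forall>d. 0 \<le> Phi_map n a d"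
    using g unfolding Phi_map_NC good_def by (auto intro!: sum_nonneg mult_nonneg_nonneg Phi_nonneg)
  have off: "\<forall>d. d \<notin> diagonals n \<longrightarrow> Phi_map n a d = 0"
    unfolding Phi_map_NC by (simp add: Phi_off)
  have "(\<Sum>d\<in>diagonals n. Phi_map n a d) = (\<Sum>D\<in>NC n. a D)" by (rule mass[OF n])
  also have "\<dots> = (\<Sum>D\<in>C. a D)"
    using CNC a finite_NC by (intro sum.mono_neutral_right) (auto simp: chain_simplex_def)
  also have "\<dots> = 1" using a by (simp add: chain_simplex_def)
  finally show ?thesis using nn off by (simp add: chamber_def)
qed

lemma finite_chains: "finite {C. nc_chain n C}"
proof -
  have "{C. nc_chain n C} \<subseteq> Pow (NC n)" by (auto simp: nc_chain_def NC_def)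
  then show ?thesis by (rule finite_subset) (simp add: finite_NC)
qed

theorem proposition11:
  fixes n :: nat
  assumes "4 \<le> n"
  shows "(\<forall>C. nc_chain n C \<longrightarrow>
            Phi_map n ` chain_simplex C \<subseteq> chamber n
            \<and> (\<exists>g. homeomorphism (chain_simplex C) (Phi_map n ` chain_simplex C) (Phi_map n) g))
         \<and> Phi_map n ` assoc n \<subseteq> chamber n
         \<and> inj_on (Phi_map n) (assoc n)
         \<and> (\<exists>g. homeomorphism (assoc n) (Phi_map n ` assoc n) (Phi_map n) g)"
proof (intro conjI allI impI)
  fix C assume C: "nc_chain n C"
  show "Phi_map n ` chain_simplex C \<subseteq> chamber n" using chain_in_chamber[OF assms C] by auto
  have sub: "chain_simplex C \<subseteq> assoc n" using C by (auto simp: assoc_def)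
  show "\<exists>g. homeomorphism (chain_simplex C) (Phi_map n ` chain_simplex C) (Phi_map n) g"
  proof (rule homeo_compact_gen)
    show "compact (chain_simplex C)" using C by (intro compact_chain_simplex) (simp add: nc_chain_def)
    show "continuous_on (chain_simplex C) (Phi_map n)" by (rule cont_Phi_map)
    show "inj_on (Phi_map n) (chain_simplex C)" using inj_assoc[OF assms] sub by (rule inj_on_subset)
  qed
next
  show "Phi_map n ` assoc n \<subseteq> chamber n"
  proof
    fix y assume "y \<in> Phi_map n ` assoc n"
    then obtain a C where "nc_chain n C" "a \<in> chain_simplex C" "y = Phi_map n a" unfolding assoc_def by auto
    then show "y \<in> chamber n" using chain_in_chamber[OF assms] by simp
  qed
next
  show "inj_on (Phi_map n) (assoc n)" by (rule inj_assoc[OF assms])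
next
  show "\<exists>g. homeomorphism (assoc n) (Phi_map n ` assoc n) (Phi_map n) g"
  proof (rule homeo_compact_gen)
    show "compact (assoc n)" unfolding assoc_def
    proof (rule compact_UN[OF finite_chains])
      fix C assume "C \<in> {C. nc_chain n C}"
      then show "compact (chain_simplex C)" by (intro compact_chain_simplex) (simp add: nc_chain_def)
    qed
    show "continuous_on (assoc n) (Phi_map n)" by (rule cont_Phi_map)
    show "inj_on (Phi_map n) (assoc n)" by (rule inj_assoc[OF assms])
  qed
qed


end
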